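(* Let $\mathcal F=\{f_1,\dots,f_M\}$ be a frame for $\mathbb C^N$ with range of coefficients $W\subset\mathbb C^M$, and suppose $\mathbb M^{\mathcal F}$ is injective. Then for every $S\subset\{1,\dots,M\}$, if $L^S\cap W\neq\{0\}$ then $L^{S^\complement}\cap W=\{0\}$. Consequently, for every such $S$, either $\{f_j\}_{j\in S}$ or $\{f_j\}_{j\in S^\complement}$ spans $\mathbb C^N$.
   Context: A frame for $\mathbb C^N$ is a spanning family $\{f_1,\dots,f_M\}$; $W=\{(\langle x,f_k\rangle)_{k=1}^M : x\in\mathbb C^N\}$ with $\langle x,y\rangle=\sum_k x_k\overline{y_k}$. For $S\subset\{1,\dots,M\}$, $L^S=\{a\in\mathbb C^M: a_i=0\ \forall i\in S\}$ and $S^\complement$ is the complement. $\mathbb M^{\mathcal F}$ is injective means $|\langle x,f_k\rangle|=|\langle y,f_k\rangle|$ for all $k$ implies $y=cx$ for some $c\in\mathbb C$, $|c|=1$. *)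

theory Defs
  imports "HOL-Analysis.Analysis"
begin

text \<open>Vectors of C^N are modelled as complex^'n, coefficient vectors in C^M as complex^'m
  (the frame index set {1..M} is the finite type 'm).\<close>

definition cinner :: "complex^'n \<Rightarrow> complex^'n \<Rightarrow> complex" where
  "cinner x y = (\<Sum>k\<in>UNIV. x $ k * cnj (y $ k))"

definition spans_on :: "'m set \<Rightarrow> ('m \<Rightarrow> complex^'n) \<Rightarrow> bool" where
  "spans_on J f \<longleftrightarrow> (\<forall>x::complex^'n. \<exists>c::'m \<Rightarrow> complex. x = (\<Sum>j\<in>J. c j *s f j))"

definition is_frame :: "('m::finite \<Rightarrow> complex^'n) \<Rightarrow> bool" where
  "is_frame f \<longleftrightarrow> spans_on UNIV f"

definition coeff_range :: "('m::finite \<Rightarrow> complex^'n) \<Rightarrow> (complex^'m) set" where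
  "coeff_range f = {(\<chi> k. cinner x (f k)) | x. True}"

definition Lsub :: "'m set \<Rightarrow> (complex^'m) set" where
  "Lsub S = {a. \<forall>i\<in>S. a $ i = 0}"

definition phase_retrieval_injective :: "('m::finite \<Rightarrow> complex^'n) \<Rightarrow> bool" where
  "phase_retrieval_injective f \<longleftrightarrow>
     (\<forall>x y. (\<forall>k. cmod (cinner x (f k)) = cmod (cinner y (f k)))
        \<longrightarrow> (\<exists>c. cmod c = 1 \<and> y = c *s x))"

end

theory Submission
  imports Defs
begin

lemma cinner_add_left: "cinner (x + y) z = cinner x z + cinner y z"
  unfolding cinner_def by (simp add: distrib_right sum.distrib)

lemma cinner_diff_left: "cinner (x - y) z = cinner x z - cinner y z"
  unfolding cinner_def by (simp add: left_diff_distrib sum_subtractf)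

lemma cinner_scale_left: "cinner (c *s x) z = c * cinner x z"
  unfolding cinner_def by (simp add: sum_distrib_left mult.assoc)

lemma cinner_sum_right:
  "cinner x (\<Sum>j\<in>J. c j *s g j) = (\<Sum>j\<in>J. cnj (c j) * cinner x (g j))"
  unfolding cinner_def
  by (simp add: sum_component sum_distrib_left) (subst sum.swap, simp add: algebra_simps)

lemma cinner_self_zero: "cinner x x = 0 \<Longrightarrow> x = (0::complex^'n)"
proof -
  assume h: "cinner x x = 0"
  have "cinner x x = (\<Sum>k\<in>UNIV. complex_of_real ((cmod (x $ k))\<^sup>2))"
    unfolding cinner_def by (rule sum.cong[OF refl]) (metis complex_norm_square)
  then have "(\<Sum>k\<in>UNIV. (cmod (x $ k))\<^sup>2) = 0" using h
    by (metis of_real_eq_0_iff of_real_sum)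
  then have "\<forall>k\<in>UNIV. (cmod (x $ k))\<^sup>2 = 0"
    by (subst sum_nonneg_eq_0_iff[symmetric]) auto
  then show ?thesis by (simp add: vec_eq_iff)
qed

lemma zero_in_range: "(0::complex^'m) \<in> coeff_range (f::'m::finite \<Rightarrow> complex^'n)"
  unfolding coeff_range_def mem_Collect_eq
  by (rule exI[of _ 0]) (simp add: vec_eq_iff cinner_def)

lemma part1:
  fixes f :: "'m::finite \<Rightarrow> complex^'n"
  assumes inj: "phase_retrieval_injective f"
    and a: "a \<in> Lsub S \<inter> coeff_range f" "a \<noteq> 0"
    and b: "b \<in> Lsub (- S) \<inter> coeff_range f" "b \<noteq> 0"
  shows False
proof -
  obtain x where ax: "a = (\<chi> k. cinner x (f k))" using a unfolding coeff_range_def by blast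
  obtain y where bx: "b = (\<chi> k. cinner y (f k))" using b unfolding coeff_range_def by blast
  have aS: "\<And>k. k \<in> S \<Longrightarrow> cinner x (f k) = 0" using a ax unfolding Lsub_def by auto
  have bS: "\<And>k. k \<notin> S \<Longrightarrow> cinner y (f k) = 0" using b bx unfolding Lsub_def by auto
  have "\<forall>k. cmod (cinner (x + y) (f k)) = cmod (cinner (x - y) (f k))"
  proof
    fix k show "cmod (cinner (x + y) (f k)) = cmod (cinner (x - y) (f k))"
      using aS[of k] bS[of k] by (cases "k \<in> S") (auto simp: cinner_add_left cinner_diff_left norm_minus_commute)
  qed
  then obtain c where c: "cmod c = 1" "x - y = c *s (x + y)"
    using inj unfolding phase_retrieval_injective_def by blast
  have eq: "\<And>k. cinner x (f k) - cinner y (f k) = c * (cinner x (f k) + cinner y (f k))"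
    using c(2) by (metis cinner_add_left cinner_diff_left cinner_scale_left)
  obtain k0 where k0: "cinner x (f k0) \<noteq> 0" using a(2) ax by (auto simp: vec_eq_iff)
  obtain k1 where k1: "cinner y (f k1) \<noteq> 0" using b(2) bx by (auto simp: vec_eq_iff)
  have "k0 \<notin> S" using k0 aS by blast
  then have "cinner x (f k0) = c * cinner x (f k0)" using eq[of k0] bS by simp
  then have c1: "c = 1" using k0 by simp
  have "k1 \<in> S" using k1 bS by blast
  then have "- cinner y (f k1) = c * cinner y (f k1)" using eq[of k1] aS by simp
  then show False using c1 k1 by simp
qed

lemma nonspan_orth:
  fixes f :: "'m::finite \<Rightarrow> complex^'n"
  assumes "\<not> spans_on S f"
  shows "\<exists>x. x \<noteq> 0 \<and> (\<forall>j\<in>S. cinner x (f j) = 0)"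
proof (rule ccontr)
  assume nh: "\<not> ?thesis"
  define A :: "complex^'n^'m" where "A = (\<chi> j k. if j \<in> S then cnj (f j $ k) else 0)"
  have Av: "A *v x = (\<chi> j. if j \<in> S then cinner x (f j) else 0)" for x
    unfolding A_def cinner_def by (simp add: vec_eq_iff matrix_vector_mult_def mult.commute)
  have "\<forall>x. A *v x = 0 \<longrightarrow> x = 0"
  proof (intro allI impI)
    fix x assume "A *v x = 0"
    have "\<forall>j\<in>S. cinner x (f j) = 0"
    proof
      fix j assume "j \<in> S"
      have "(A *v x) $ j = 0" using \<open>A *v x = 0\<close> by simp
      then show "cinner x (f j) = 0" using \<open>j \<in> S\<close> by (simp add: Av)
    qed
    then show "x = 0" using nh by blast
  qed
  then obtain B where "B ** A = mat 1" using matrix_left_invertible_ker by blast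
  then have "transpose A ** transpose B = mat 1"
    by (metis matrix_transpose_mul transpose_mat)
  then have surj: "surj (\<lambda>x. transpose A *v x)"
    using matrix_right_invertible_surjective by blast
  have "spans_on S f"
    unfolding spans_on_def
  proof
    fix x :: "complex^'n"
    obtain c where c: "(\<chi> k. cnj (x $ k)) = transpose A *v c" using surj by (metis surjD)
    have "x = (\<Sum>j\<in>S. cnj (c $ j) *s f j)"
    proof (subst vec_eq_iff, rule allI)
      fix k
      have "cnj (x $ k) = (\<Sum>j\<in>UNIV. (if j \<in> S then cnj (f j $ k) else 0) * c $ j)"
        using c unfolding A_def by (simp add: vec_eq_iff matrix_vector_mult_def transpose_def)
      also have "\<dots> = (\<Sum>j\<in>S. cnj (f j $ k) * c $ j)"
        by (rule sum.mono_neutral_cong_right) auto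
      finally have "cnj (cnj (x $ k)) = cnj (\<Sum>j\<in>S. cnj (f j $ k) * c $ j)"
        by simp
      then have "x $ k = (\<Sum>j\<in>S. f j $ k * cnj (c $ j))"
        by simp
      then show "x $ k = (\<Sum>j\<in>S. cnj (c $ j) *s f j) $ k"
        by (simp add: sum_component mult.commute)
    qed
    then show "\<exists>c. x = (\<Sum>j\<in>S. c j *s f j)" by (rule exI[of _ "\<lambda>j. cnj (c $ j)"])
  qed
  then show False using assms by blast
qed

lemma part2:
  fixes f :: "'m::finite \<Rightarrow> complex^'n"
  assumes fr: "is_frame f" and ns: "\<not> spans_on S f"
  shows "\<exists>a. a \<in> Lsub S \<inter> coeff_range f \<and> a \<noteq> 0"
proof -
  obtain x where x: "x \<noteq> 0" "\<forall>j\<in>S. cinner x (f j) = 0" using nonspan_orth[OF ns] by blast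
  define a where "a = (\<chi> k. cinner x (f k))"
  have "a \<in> Lsub S \<inter> coeff_range f" using x unfolding a_def Lsub_def coeff_range_def by auto
  moreover have "a \<noteq> 0"
  proof
    assume "a = 0"
    then have z: "\<And>k. cinner x (f k) = 0" unfolding a_def by (simp add: vec_eq_iff)
    obtain c where "x = (\<Sum>j\<in>UNIV. c j *s f j)" using fr unfolding is_frame_def spans_on_def by blast
    then have "cinner x x = (\<Sum>j\<in>UNIV. cnj (c j) * cinner x (f j))"
      by (simp only: cinner_sum_right)
    then have "cinner x x = 0" using z by simp
    then show False using x cinner_self_zero by blast
  qed
  ultimately show ?thesis by blast
qed

theorem proposition3p5:
  fixes f :: "'m::finite \<Rightarrow> complex^'n"
  assumes "is_frame f"
    and "phase_retrieval_injective f"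
  shows "\<forall>S::'m set. (Lsub S \<inter> coeff_range f \<noteq> {0} \<longrightarrow> Lsub (- S) \<inter> coeff_range f = {0})
              \<and> (spans_on S f \<or> spans_on (- S) f)"
proof
  fix S :: "'m set"
  have z: "\<And>T. (0::complex^'m) \<in> Lsub T \<inter> coeff_range f"
    using zero_in_range[of f] unfolding Lsub_def by auto
  have P1: "Lsub S \<inter> coeff_range f \<noteq> {0} \<longrightarrow> Lsub (- S) \<inter> coeff_range f = {0}"
  proof
    assume "Lsub S \<inter> coeff_range f \<noteq> {0}"
    then obtain a where a: "a \<in> Lsub S \<inter> coeff_range f" "a \<noteq> 0" using z by blast
    show "Lsub (- S) \<inter> coeff_range f = {0}"
    proof (rule ccontr)
      assume "Lsub (- S) \<inter> coeff_range f \<noteq> {0}"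
      then obtain b where b: "b \<in> Lsub (- S) \<inter> coeff_range f" "b \<noteq> 0" using z by blast
      show False using part1[OF assms(2) a b] .
    qed
  qed
  have "spans_on S f \<or> spans_on (- S) f"
  proof (rule ccontr)
    assume "\<not> ?thesis"
    then have n1: "\<not> spans_on S f" and n2: "\<not> spans_on (- S) f" by auto
    obtain a where a: "a \<in> Lsub S \<inter> coeff_range f" "a \<noteq> 0"
      using part2[OF assms(1) n1] by blast
    obtain b where b: "b \<in> Lsub (- S) \<inter> coeff_range f" "b \<noteq> 0"
      using part2[OF assms(1) n2] by blast
    show False using part1[OF assms(2) a b] .
  qed
  then show "(Lsub S \<inter> coeff_range f \<noteq> {0} \<longrightarrow> Lsub (- S) \<inter> coeff_range f = {0})
              \<and> (spans_on S f \<or> spans_on (- S) f)" using P1 by blast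
qed

end
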